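(* Consider the DS-PSRL algorithm with parameters sampled at times $1,2,4,8,\dots$. Let $m$ be the number of episodes up to time $T$, $M_j$ the number of steps of episode $j$, $N_j$ one plus the number of steps in the first $j$ episodes (so $N_0=1$, $N_j=N_{j-1}+M_j$), and $\widetilde\theta_j$ the parameter sampled for episode $j$. Suppose there is a constant $C'$ with $\max_j\mathbb{E}\big[N_{j-1}|\theta_*-\widetilde\theta_j|^2\big]\le C'\log T$. Then \[ \mathbb{E}\Big[\sum_{j=1}^m M_j|\theta_*-\widetilde\theta_j|^2\Big]\le 2C'\log^2T. \]
   Context: Setting: parametrized MDP with scalar unknown parameter $\theta_*\in\Theta\subseteq\mathbb{R}$ drawn from a known prior. DS-PSRL: set $L=1$; at each step $t$, if $t=L$ sample $\widetilde\theta_t$ from the current posterior of $\theta_*$ and set $L\leftarrow2L$, else keep $\widetilde\theta_t=\widetilde\theta_{t-1}$; act optimally for parameter $\widetilde\theta_t$ and update the posterior with the observed transition. An episode is a maximal run of steps with the same sampled parameter. *)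

theory Defs
  imports "HOL-Probability.Probability"
begin

text \<open>Doubling schedule of DS-PSRL. dspsrl_L t is the value of the variable L
  at the beginning of step t (t >= 1): L = 1 initially, and at step t, if t = L
  a new parameter is sampled and L is doubled.\<close>
primrec dspsrl_L :: "nat \<Rightarrow> nat" where
  "dspsrl_L 0 = 1"
| "dspsrl_L (Suc t) = (if t = dspsrl_L t then 2 * dspsrl_L t else dspsrl_L t)"

definition resample :: "nat \<Rightarrow> bool" where
  "resample t \<longleftrightarrow> 1 \<le> t \<and> t = dspsrl_L t"

definition episode_of :: "nat \<Rightarrow> nat" where
  "episode_of t = card {s \<in> {1..t}. resample s}"

definition num_episodes :: "nat \<Rightarrow> nat" where
  "num_episodes T = episode_of T"

definition ep_len :: "nat \<Rightarrow> nat \<Rightarrow> nat" where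
  "ep_len T j = card {t \<in> {1..T}. episode_of t = j}"

definition ep_N :: "nat \<Rightarrow> nat \<Rightarrow> nat" where
  "ep_N T j = 1 + (\<Sum>i=1..j. ep_len T i)"

end

theory Submission
  imports Defs
begin

lemma L_props: "t \<ge> 1 \<Longrightarrow> t \<le> dspsrl_L t \<and> dspsrl_L t < 2*t \<and> (\<exists>k. dspsrl_L t = 2^k)"
proof (induction t)
  case 0 then show ?case by simp
next
  case (Suc t)
  show ?case
  proof (cases "t = 0")
    case True then show ?thesis by (auto intro: exI[of _ 0])
  next
    case False
    then have IH: "t \<le> dspsrl_L t \<and> dspsrl_L t < 2*t \<and> (\<exists>k. dspsrl_L t = 2^k)" using Suc by auto
    then obtain k where k: "dspsrl_L t = 2^k" by auto
    show ?thesis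
    proof (cases "t = dspsrl_L t")
      case True
      then show ?thesis using False k by (auto intro: exI[of _ "Suc k"])
    next
      case F2: False
      then show ?thesis using IH by auto
    qed
  qed
qed

lemma pow_unique: "(2::nat)^a \<le> t \<Longrightarrow> t < 2^(Suc a) \<Longrightarrow> 2^b \<le> t \<Longrightarrow> t < 2^(Suc b) \<Longrightarrow> a = b"
proof (rule ccontr)
  assume h: "2^a \<le> t" "t < 2^(Suc a)" "2^b \<le> t" "t < (2::nat)^(Suc b)" "a \<noteq> b"
  show False
  proof (cases "a < b")
    case True
    then have "(2::nat)^(Suc a) \<le> 2^b" by (intro power_increasing) auto
    then show False using h by auto
  next
    case False
    then have "b < a" using h by auto
    then have "(2::nat)^(Suc b) \<le> 2^a" by (intro power_increasing) auto
    then show False using h by auto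
  qed
qed

lemma resample_iff: "resample s \<longleftrightarrow> (\<exists>k. s = 2^k)"
proof
  assume "resample s" then show "\<exists>k. s = 2^k" unfolding resample_def using L_props[of s] by auto
next
  assume "\<exists>k. s = 2^k"
  then obtain k where k: "s = 2^k" by auto
  then have s1: "s \<ge> 1" by simp
  from L_props[OF s1] obtain i :: nat where i: "dspsrl_L s = 2^i" "s \<le> 2 ^ i" "2 ^ i < 2 * s" by auto
  have "i = k" using pow_unique[of i "2^i" k] i k by auto
  then show "resample s" unfolding resample_def using s1 i k by simp
qed

lemma episode_eq: assumes "2^n \<le> t" "t < 2^(Suc n)" shows "episode_of t = Suc n"
proof -
  have "{s \<in> {1..t}. resample s} = (\<lambda>k. 2^k) ` {..n}"
  proof (rule set_eqI, rule iffI)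
    fix s assume "s \<in> {s \<in> {1..t}. resample s}"
    then obtain k where k: "s = 2^k" "s \<le> t" using resample_iff by auto
    have "k \<le> n"
    proof (rule ccontr)
      assume "\<not> k \<le> n"
      then have "(2::nat)^(Suc n) \<le> 2^k" by (intro power_increasing) auto
      then show False using k assms by auto
    qed
    then show "s \<in> (\<lambda>k. 2^k) ` {..n}" using k by auto
  next
    fix s assume "s \<in> (\<lambda>k. (2::nat)^k) ` {..n}"
    then obtain k where k: "s = 2^k" "k \<le> n" by auto
    then have "s \<le> 2^n" by (simp add: power_increasing)
    then have "s \<le> t" using assms by linarith
    then show "s \<in> {s \<in> {1..t}. resample s}" using k assms resample_iff by auto
  qed
  moreover have "inj_on (\<lambda>k. (2::nat)^k) {..n}" by (auto intro: inj_onI)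
  ultimately show ?thesis unfolding episode_of_def by (simp add: card_image)
qed

lemma ex_n: "t \<ge> 1 \<Longrightarrow> \<exists>n. 2^n \<le> t \<and> t < (2::nat)^(Suc n)"
  using ex_power_ivl1[of 2 t] by auto

lemma episode_iff: assumes "t \<ge> 1" "j \<ge> 1"
  shows "episode_of t = j \<longleftrightarrow> 2^(j-1) \<le> t \<and> t < 2^j"
proof -
  obtain n where n: "2^n \<le> t" "t < (2::nat)^(Suc n)" using ex_n assms by auto
  have e: "episode_of t = Suc n" using episode_eq n by blast
  show ?thesis
  proof
    assume "episode_of t = j" then show "2^(j-1) \<le> t \<and> t < 2^j" using e n by auto
  next
    assume h: "2^(j-1) \<le> t \<and> t < 2^j"
    then have "j - 1 = n" using pow_unique[of "j-1" t n] n assms by auto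
    then show "episode_of t = j" using e assms by auto
  qed
qed

lemma ep_len_set: assumes "j \<ge> 1"
  shows "{t \<in> {1..T}. episode_of t = j} = {1..T} \<inter> {2^(j-1)..<2^j}"
proof (rule set_eqI)
  fix t show "t \<in> {t \<in> {1..T}. episode_of t = j} \<longleftrightarrow> t \<in> {1..T} \<inter> {2^(j-1)..<2^j}"
  proof (cases "t \<ge> 1")
    case True then show ?thesis using episode_iff[OF True assms] by auto
  qed auto
qed

lemma ep_len_le: assumes "j \<ge> 1" shows "ep_len T j \<le> 2^(j-1)"
proof -
  have "ep_len T j \<le> card {(2::nat)^(j-1)..<2^j}"
    unfolding ep_len_def ep_len_set[OF assms] by (intro card_mono) auto
  also have "\<dots> = 2^(j-1)" using assms by (cases j) auto
  finally show ?thesis .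
qed

lemma ep_len_full: assumes "i \<ge> 1" "2^i \<le> T + 1" shows "ep_len T i = 2^(i-1)"
proof -
  have o: "(1::nat) \<le> 2^(i-1)" by simp
  have "{1..T} \<inter> {(2::nat)^(i-1)..<2^i} = {2^(i-1)..<2^i}"
  proof (rule set_eqI, rule iffI)
    fix x assume "x \<in> {(2::nat)^(i-1)..<2^i}"
    then have x1: "2^(i-1) \<le> x" "x < 2^i" by auto
    have "1 \<le> x" using o x1(1) by (rule order_trans)
    moreover have "x \<le> T" using x1(2) assms by linarith
    ultimately have "1 \<le> x" "x \<le> T" by auto
    then show "x \<in> {1..T} \<inter> {(2::nat)^(i-1)..<2^i}" using \<open>x \<in> {(2::nat)^(i-1)..<2^i}\<close> by auto
  qed auto
  then have "ep_len T i = card {(2::nat)^(i-1)..<2^i}"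
    unfolding ep_len_def ep_len_set[OF assms(1)] by simp
  also have "\<dots> = 2^(i-1)" using assms by (cases i) auto
  finally show ?thesis .
qed

lemma geo_sum: "(\<Sum>i=1..k. (2::nat)^(i-1)) = 2^k - 1"
proof (induction k)
  case 0 then show ?case by simp
next
  case (Suc k)
  have "(1::nat) \<le> 2^k" by simp
  then show ?case using Suc by simp
qed

lemma M_le_N: assumes "T \<ge> 1" "j \<in> {1..num_episodes T}" shows "ep_len T j \<le> ep_N T (j-1)"
proof -
  obtain n where n: "2^n \<le> T" "T < (2::nat)^(Suc n)" using ex_n assms by auto
  have m: "num_episodes T = Suc n" unfolding num_episodes_def using episode_eq n by blast
  have "(\<Sum>i=1..j-1. ep_len T i) = (\<Sum>i=1..j-1. 2^(i-1))"
  proof (rule sum.cong)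
    fix i assume i: "i \<in> {1..j-1}"
    then have "i \<le> n" using assms m by auto
    then have "(2::nat)^i \<le> 2^n" by (simp add: power_increasing)
    then have "(2::nat)^i \<le> T + 1" using n by linarith
    then show "ep_len T i = 2^(i-1)" using ep_len_full[of i T] i n by auto
  qed simp
  then have "ep_N T (j-1) = 2^(j-1)" unfolding ep_N_def geo_sum by simp
  then show ?thesis using ep_len_le[of j T] assms by auto
qed

lemma m_le: assumes "T \<ge> 1" shows "real (num_episodes T) \<le> log 2 (real T) + 1"
proof -
  obtain n where n: "2^n \<le> T" "T < (2::nat)^(Suc n)" using ex_n assms by auto
  have m: "num_episodes T = Suc n" unfolding num_episodes_def using episode_eq n by blast
  have "real n \<le> log 2 (real T)" using le_log2_of_power[OF n(1)] by simp
  then show ?thesis using m by simp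
qed


theorem lemma4:
  fixes M :: "'a measure" and theta_star :: "'a \<Rightarrow> real"
    and theta_tilde :: "nat \<Rightarrow> 'a \<Rightarrow> real" and T :: nat and C' :: real
  assumes "prob_space M"
    and "theta_star \<in> borel_measurable M"
    and "\<And>j. theta_tilde j \<in> borel_measurable M"
    and "T \<ge> 1"
    and "\<forall>j\<in>{1..num_episodes T}.
           (\<integral>\<^sup>+ \<omega>. ennreal (real (ep_N T (j - 1)) * (theta_star \<omega> - theta_tilde j \<omega>)^2) \<partial>M)
             \<le> ennreal (C' * log 2 (real T))"
  shows "(\<integral>\<^sup>+ \<omega>. ennreal (\<Sum>j=1..num_episodes T.
              real (ep_len T j) * (theta_star \<omega> - theta_tilde j \<omega>)^2) \<partial>M)
           \<le> ennreal (2 * C' * (log 2 (real T))^2)"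
proof -
  define m where "m = num_episodes T"
  define L where "L = log 2 (real T)"
  define c where "c = C' * L"
  have meas: "\<And>j. (\<lambda>\<omega>. ennreal (real (ep_len T j) * (theta_star \<omega> - theta_tilde j \<omega>)^2)) \<in> borel_measurable M"
    using assms(2,3) by measurable
  have "(\<integral>\<^sup>+ \<omega>. ennreal (\<Sum>j=1..m. real (ep_len T j) * (theta_star \<omega> - theta_tilde j \<omega>)^2) \<partial>M)
      = (\<integral>\<^sup>+ \<omega>. (\<Sum>j=1..m. ennreal (real (ep_len T j) * (theta_star \<omega> - theta_tilde j \<omega>)^2)) \<partial>M)"
    by (subst sum_ennreal) auto
  also have "\<dots> = (\<Sum>j=1..m. \<integral>\<^sup>+ \<omega>. ennreal (real (ep_len T j) * (theta_star \<omega> - theta_tilde j \<omega>)^2) \<partial>M)"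
    by (rule nn_integral_sum) (use meas in auto)
  also have "\<dots> \<le> (\<Sum>j=1..m. \<integral>\<^sup>+ \<omega>. ennreal (real (ep_N T (j - 1)) * (theta_star \<omega> - theta_tilde j \<omega>)^2) \<partial>M)"
  proof (rule sum_mono, rule nn_integral_mono)
    fix j x assume j: "j \<in> {1..m}"
    have "real (ep_len T j) \<le> real (ep_N T (j - 1))" using M_le_N[OF assms(4)] j m_def by auto
    then show "ennreal (real (ep_len T j) * (theta_star x - theta_tilde j x)^2)
        \<le> ennreal (real (ep_N T (j - 1)) * (theta_star x - theta_tilde j x)^2)"
      by (intro ennreal_leI mult_right_mono) auto
  qed
  also have "\<dots> \<le> (\<Sum>j=1..m. ennreal c)"
    by (rule sum_mono) (use assms(5) m_def c_def L_def in auto)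
  also have "\<dots> = of_nat m * ennreal c" by simp
  also have "\<dots> \<le> ennreal (2 * C' * L^2)"
  proof (cases "c \<ge> 0")
    case False then show ?thesis by (simp add: ennreal_neg)
  next
    case True
    have L0: "L \<ge> 0" unfolding L_def using assms(4) by simp
    have mL: "real m \<le> L + 1" using m_le[OF assms(4)] m_def L_def by simp
    have "real m * c \<le> 2 * C' * L^2"
    proof (cases "L = 0")
      case True then show ?thesis using c_def by simp
    next
      case False
      then have Lp: "L > 0" using L0 by simp
      then have C0: "C' \<ge> 0" using \<open>c \<ge> 0\<close> c_def by (simp add: zero_le_mult_iff)
      have "T \<noteq> 1" using Lp L_def by auto
      then have "real T \<ge> 2" using assms(4) by simp
      then have "L \<ge> 1" unfolding L_def by simp
      then have "real m \<le> 2 * L" using mL by simp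
      then have "real m * c \<le> (2 * L) * c" using True by (rule mult_right_mono)
      then show ?thesis using c_def by (simp add: power2_eq_square algebra_simps)
    qed
    moreover have "of_nat m * ennreal c = ennreal (real m * c)"
      using True by (simp add: ennreal_mult ennreal_of_nat_eq_real_of_nat)
    ultimately show ?thesis by (simp add: ennreal_leI)
  qed
  finally show ?thesis unfolding m_def L_def .
qed

end
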